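(* Let $Z$ be a real Banach space and $f:Z\to\mathbb{R}$ a continuous convex function. For $z\in Z$ and $\xi\in\partial f(z)$ define $$Y(f,z,\xi)=\{v\in Z: f(z+tv)-f(z)-\langle\xi,tv\rangle=0 \text{ for all } t\in\mathbb{R}\}.$$ Then for all $z_1,z_2\in Z$, $\xi_1\in\partial f(z_1)$, $\xi_2\in\partial f(z_2)$: (1) $Y(f,z_1,\xi_1)$ is a closed linear subspace of $Z$; (2) $Y(f,z_1,\xi_1)=Y(f,z_2,\xi_2)$; (3) $f(z_1+v)=f(z_1)+\langle\xi_1,v\rangle$ for all $v\in Y(f,z_1,\xi_1)$; (4) $\langle\xi_2-\xi_1,v\rangle=0$ for all $v\in Y(f,z_1,\xi_1)$.
   Context: $\partial f(x)=\{\xi\in Z^*: f(y)\ge f(x)+\langle\xi,y-x\rangle \text{ for all } y\in Z\}$. *)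

theory Defs
  imports "HOL-Analysis.Analysis"
begin

definition subdifferential :: "('a::real_normed_vector \<Rightarrow> real) \<Rightarrow> 'a \<Rightarrow> ('a \<Rightarrow>\<^sub>L real) set" where
  "subdifferential f x = {\<xi>. \<forall>y. f y \<ge> f x + blinfun_apply \<xi> (y - x)}"

definition Yset :: "('a::real_normed_vector \<Rightarrow> real) \<Rightarrow> 'a \<Rightarrow> ('a \<Rightarrow>\<^sub>L real) \<Rightarrow> 'a set" where
  "Yset f z \<xi> = {v. \<forall>t::real. f (z + t *\<^sub>R v) - f z - blinfun_apply \<xi> (t *\<^sub>R v) = 0}"

end

theory Submission
  imports Defs
begin

lemma Y_le:
  fixes f :: "'a::real_normed_vector \<Rightarrow> real"
  assumes cont: "continuous_on UNIV f" and cvx: "convex_on UNIV f"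
    and v: "v \<in> Yset f z \<xi>"
  shows "f (y + t *\<^sub>R v) \<le> f y + t * blinfun_apply \<xi> v"
proof -
  have line: "f (z + r *\<^sub>R v) = f z + r * blinfun_apply \<xi> v" for r
  proof -
    have "f (z + r *\<^sub>R v) - f z = r * blinfun_apply \<xi> v"
      using v by (auto simp: Yset_def blinfun.scaleR_right)
    then show ?thesis by linarith
  qed
  define a where "a = (\<lambda>s::real. (1/(1-s)) *\<^sub>R (y - s *\<^sub>R z))"
  have ev: "eventually (\<lambda>s. f (y + t *\<^sub>R v) \<le> (1-s) * f (a s) + s * f z + t * blinfun_apply \<xi> v) (at_right 0)"
  proof -
    have "eventually (\<lambda>s::real. 0 < s \<and> s < 1) (at_right 0)"
      using eventually_at_right_real[of 0 1] eventually_at_right_less[of 0]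
      by (auto elim: eventually_elim2)
    then show ?thesis
    proof (rule eventually_mono)
      fix s :: real assume s: "0 < s \<and> s < 1"
      have eq: "(1 - s) *\<^sub>R a s + s *\<^sub>R (z + (t/s) *\<^sub>R v) = y + t *\<^sub>R v"
      proof -
        have "(1 - s) *\<^sub>R a s = y - s *\<^sub>R z" using s by (simp add: a_def)
        moreover have "s *\<^sub>R (z + (t/s) *\<^sub>R v) = s *\<^sub>R z + t *\<^sub>R v"
          using s by (simp add: scaleR_right_distrib)
        moreover have "(y - s *\<^sub>R z) + (s *\<^sub>R z + t *\<^sub>R v) = y + t *\<^sub>R v" by simp
        ultimately show ?thesis by simp
      qed
      have "f ((1 - s) *\<^sub>R a s + s *\<^sub>R (z + (t/s) *\<^sub>R v)) \<le> (1-s) * f (a s) + s * f (z + (t/s) *\<^sub>R v)"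
        using s by (intro convex_onD[OF cvx]) auto
      also have "s * f (z + (t/s) *\<^sub>R v) = s * f z + t * blinfun_apply \<xi> v"
        using s by (simp add: line algebra_simps)
      finally show "f (y + t *\<^sub>R v) \<le> (1-s) * f (a s) + s * f z + t * blinfun_apply \<xi> v"
        using eq by simp
    qed
  qed
  have "(a \<longlongrightarrow> (1/(1-0)) *\<^sub>R (y - 0 *\<^sub>R z)) (at_right 0)"
    unfolding a_def by (intro tendsto_intros) auto
  then have "(a \<longlongrightarrow> y) (at_right 0)" by simp
  moreover have "isCont f y" using cont by (simp add: continuous_on_eq_continuous_at)
  ultimately have fa: "((\<lambda>s. f (a s)) \<longlongrightarrow> f y) (at_right 0)"
    using isCont_tendsto_compose by blast
  have "((\<lambda>s. (1-s) * f (a s) + s * f z + t * blinfun_apply \<xi> v) \<longlongrightarrow>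
      (1-0) * f y + 0 * f z + t * blinfun_apply \<xi> v) (at_right 0)"
    by (intro tendsto_intros fa)
  then have lim: "((\<lambda>s. (1-s) * f (a s) + s * f z + t * blinfun_apply \<xi> v) \<longlongrightarrow>
      f y + t * blinfun_apply \<xi> v) (at_right (0::real))" by simp
  show ?thesis
    by (rule tendsto_le[OF trivial_limit_at_right_real lim tendsto_const ev])
qed

lemma Y_eq:
  fixes f :: "'a::real_normed_vector \<Rightarrow> real"
  assumes cont: "continuous_on UNIV f" and cvx: "convex_on UNIV f"
    and v: "v \<in> Yset f z \<xi>"
  shows "f (y + t *\<^sub>R v) = f y + t * blinfun_apply \<xi> v"
proof -
  have "f ((y + t *\<^sub>R v) + (-t) *\<^sub>R v) \<le> f (y + t *\<^sub>R v) + (-t) * blinfun_apply \<xi> v"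
    by (rule Y_le[OF cont cvx v])
  then have "f y \<le> f (y + t *\<^sub>R v) - t * blinfun_apply \<xi> v" by simp
  with Y_le[OF cont cvx v, of y t] show ?thesis by linarith
qed

lemma Y_char:
  fixes f :: "'a::real_normed_vector \<Rightarrow> real"
  assumes cont: "continuous_on UNIV f" and cvx: "convex_on UNIV f"
  shows "Yset f z \<xi> = {v. \<forall>y t. f (y + t *\<^sub>R v) = f y + t * blinfun_apply \<xi> v}"
  using Y_eq[OF cont cvx] by (auto simp: Yset_def blinfun.scaleR_right)

lemma Y_sub:
  fixes f :: "'a::real_normed_vector \<Rightarrow> real"
  assumes cont: "continuous_on UNIV f" and cvx: "convex_on UNIV f"
    and x1: "\<xi>1 \<in> subdifferential f z1" and x2: "\<xi>2 \<in> subdifferential f z2"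
    and v: "v \<in> Yset f z1 \<xi>1"
  shows "blinfun_apply \<xi>1 v = blinfun_apply \<xi>2 v \<and> v \<in> Yset f z2 \<xi>2"
proof -
  have e: "f (z2 + t *\<^sub>R v) = f z2 + t * blinfun_apply \<xi>1 v" for t
    by (rule Y_eq[OF cont cvx v])
  have g: "f (z2 + t *\<^sub>R v) \<ge> f z2 + t * blinfun_apply \<xi>2 v" for t
  proof -
    have "f (z2 + t *\<^sub>R v) \<ge> f z2 + blinfun_apply \<xi>2 ((z2 + t *\<^sub>R v) - z2)"
      using x2 unfolding subdifferential_def by blast
    then show ?thesis by (simp add: blinfun.scaleR_right)
  qed
  have "blinfun_apply \<xi>1 v \<ge> blinfun_apply \<xi>2 v" using e[of 1] g[of 1] by simp
  moreover have "blinfun_apply \<xi>1 v \<le> blinfun_apply \<xi>2 v" using e[of "-1"] g[of "-1"] by simp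
  ultimately have eq: "blinfun_apply \<xi>1 v = blinfun_apply \<xi>2 v" by simp
  then show ?thesis using e by (auto simp: Yset_def blinfun.scaleR_right)
qed

theorem mainTheorem4:
  fixes f :: "'a::banach \<Rightarrow> real"
    and z1 z2 :: 'a and \<xi>1 \<xi>2 :: "'a \<Rightarrow>\<^sub>L real"
  assumes "continuous_on UNIV f"
    and "convex_on UNIV f"
    and "\<xi>1 \<in> subdifferential f z1"
    and "\<xi>2 \<in> subdifferential f z2"
  shows "(subspace (Yset f z1 \<xi>1) \<and> closed (Yset f z1 \<xi>1))
    \<and> Yset f z1 \<xi>1 = Yset f z2 \<xi>2
    \<and> (\<forall>v \<in> Yset f z1 \<xi>1. f (z1 + v) = f z1 + blinfun_apply \<xi>1 v)
    \<and> (\<forall>v \<in> Yset f z1 \<xi>1. blinfun_apply (\<xi>2 - \<xi>1) v = 0)"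
proof (intro conjI ballI)
  note C = Y_char[OF assms(1,2), of z1 \<xi>1]
  show "subspace (Yset f z1 \<xi>1)"
    unfolding C subspace_def
  proof (intro conjI allI impI ballI CollectI)
    fix y :: 'a and t :: real
    show "f (y + t *\<^sub>R 0) = f y + t * blinfun_apply \<xi>1 0" by simp
  next
    fix u w y and t :: real
    assume u: "u \<in> {v. \<forall>y t. f (y + t *\<^sub>R v) = f y + t * blinfun_apply \<xi>1 v}"
      and w: "w \<in> {v. \<forall>y t. f (y + t *\<^sub>R v) = f y + t * blinfun_apply \<xi>1 v}"
    have "f (y + t *\<^sub>R (u + w)) = f ((y + t *\<^sub>R u) + t *\<^sub>R w)" by (simp add: algebra_simps)
    also have "\<dots> = f y + t * blinfun_apply \<xi>1 u + t * blinfun_apply \<xi>1 w" using u w by simp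
    finally show "f (y + t *\<^sub>R (u + w)) = f y + t * blinfun_apply \<xi>1 (u + w)"
      by (simp add: blinfun.add_right algebra_simps)
  next
    fix c :: real and u y and t :: real
    assume u: "u \<in> {v. \<forall>y t. f (y + t *\<^sub>R v) = f y + t * blinfun_apply \<xi>1 v}"
    have "f (y + t *\<^sub>R (c *\<^sub>R u)) = f (y + (t*c) *\<^sub>R u)" by simp
    also have "\<dots> = f y + (t*c) * blinfun_apply \<xi>1 u" using u by blast
    finally show "f (y + t *\<^sub>R (c *\<^sub>R u)) = f y + t * blinfun_apply \<xi>1 (c *\<^sub>R u)"
      by (simp add: blinfun.scaleR_right)
  qed
  have "Yset f z1 \<xi>1 = (\<Inter>t. {v. f (z1 + t *\<^sub>R v) - f z1 - blinfun_apply \<xi>1 (t *\<^sub>R v) = 0})"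
    by (auto simp: Yset_def)
  also have "closed \<dots>"
  proof (intro closed_INT ballI closed_Collect_eq)
    fix t :: real
    have "continuous_on UNIV (\<lambda>v. f (z1 + t *\<^sub>R v))"
      by (intro continuous_on_compose2[OF assms(1)] continuous_intros) auto
    then show "continuous_on UNIV (\<lambda>v. f (z1 + t *\<^sub>R v) - f z1 - blinfun_apply \<xi>1 (t *\<^sub>R v))"
      by (intro continuous_intros) auto
  qed simp
  finally show "closed (Yset f z1 \<xi>1)" .
  show "Yset f z1 \<xi>1 = Yset f z2 \<xi>2"
    using Y_sub[OF assms] Y_sub[OF assms(1,2,4,3)] by blast
next
  fix v assume v: "v \<in> Yset f z1 \<xi>1"
  show "f (z1 + v) = f z1 + blinfun_apply \<xi>1 v" using Y_eq[OF assms(1,2) v, of z1 1] by simp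
  show "blinfun_apply (\<xi>2 - \<xi>1) v = 0" using Y_sub[OF assms v]
    by (simp add: minus_blinfun.rep_eq)
qed

end
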